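(* In the minor-player mean-field equilibrium, the mean inventory $E(t)=\int q\,m(t,dq)$ is the unique $C^2([0,T])$ solution of the two-point boundary value problem $$2\eta E''(t)+\gamma E'(t)=-\gamma^0\nu^0_t,\quad t\in[0,T],\qquad E(0)=E_0,\qquad E'(T)+\frac{\alpha}{\eta}E(T)=0,$$ and the remaining coefficients are recovered by $\mu_t=E'(t)$, $h_1(t)=2\eta E'(t)-2h_2(t)E(t)$, $h_0(t)=\frac1{4\eta}\int_t^Th_1(s)^2ds$, with $h_2(t)=-\frac{\alpha\eta}{\eta+\alpha(T-t)}$.
   Context: Competitive market with constants $\gamma^0,\gamma,\eta,\alpha>0$, horizon $T$, continuous major lit rate $t\mapsto\nu^0_t$, and initial minor inventory distribution $m_0$ with mean $E_0$. The equilibrium $(h,m,\mu)$ satisfies: $\partial_th+\frac1{4\eta}(\partial_qh)^2+(\gamma^0\nu^0_t+\gamma\mu_t)q=0$, $h(T,q)=-\alpha q^2$; $\partial_tm+\partial_q(m\,\partial_qh/(2\eta))=0$, $m(0)=m_0$; $\mu_t=\int\frac{\partial_qh(t,q)}{2\eta}m(t,dq)$; and $h(t,q)=h_0(t)+h_1(t)q+h_2(t)q^2$ with $h_0(T)=h_1(T)=0$, $h_2(T)=-\alpha$. *)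

theory Defs
  imports "HOL-Probability.Probability"
begin

definition C2_on :: "real \<Rightarrow> (real \<Rightarrow> real) \<Rightarrow> (real \<Rightarrow> real) \<Rightarrow> (real \<Rightarrow> real) \<Rightarrow> bool" where
  "C2_on T f f1 f2 \<longleftrightarrow>
     (\<forall>t\<in>{0..T}. (f has_real_derivative f1 t) (at t within {0..T})
                \<and> (f1 has_real_derivative f2 t) (at t within {0..T}))
     \<and> continuous_on {0..T} f2"

definition mean_BVP ::
  "real \<Rightarrow> real \<Rightarrow> real \<Rightarrow> real \<Rightarrow> real \<Rightarrow> (real \<Rightarrow> real) \<Rightarrow> real
   \<Rightarrow> (real \<Rightarrow> real) \<Rightarrow> (real \<Rightarrow> real) \<Rightarrow> (real \<Rightarrow> real) \<Rightarrow> bool" where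
  "mean_BVP \<gamma>0 \<gamma> \<eta> \<alpha> T \<nu>0 E0 E E1 E2 \<longleftrightarrow>
     C2_on T E E1 E2
     \<and> (\<forall>t\<in>{0..T}. 2 * \<eta> * E2 t + \<gamma> * E1 t = - \<gamma>0 * \<nu>0 t)
     \<and> E 0 = E0
     \<and> E1 T + (\<alpha> / \<eta>) * E T = 0"

end

theory Submission
  imports Defs
begin

lemma zero_deriv_eq:
  fixes f :: "real \<Rightarrow> real"
  assumes "\<And>t. t \<in> {0..T} \<Longrightarrow> (f has_real_derivative 0) (at t within {0..T})"
    and "a \<in> {0..T}" "b \<in> {0..T}"
  shows "f a = f b"
proof -
  obtain c where "\<forall>x\<in>{0..T}. f x = c"
    using has_field_derivative_zero_constant[of "{0..T}" f] assms(1) by auto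
  then show ?thesis using assms by auto
qed

lemma bvp_unique:
  assumes g: "\<gamma> > 0" and e: "\<eta> > 0" and al: "\<alpha> > 0"
    and F: "mean_BVP \<gamma>0 \<gamma> \<eta> \<alpha> T \<nu>0 E0 F F1 F2"
    and G: "mean_BVP \<gamma>0 \<gamma> \<eta> \<alpha> T \<nu>0 E0 G G1 G2"
    and t: "t \<in> {0..T}"
  shows "F t = G t"
proof -
  define k where "k = \<gamma> / (2 * \<eta>)"
  have k: "k > 0" using g e by (simp add: k_def)
  have T0: "0 \<le> T" using t by auto
  define D where "D s = F s - G s" for s
  define D1 where "D1 s = F1 s - G1 s" for s
  define D2 where "D2 s = F2 s - G2 s" for s
  have dD: "(D has_real_derivative D1 s) (at s within {0..T})" if "s \<in> {0..T}" for s
    using F G that unfolding mean_BVP_def C2_on_def D_def D1_def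
    by (auto intro!: derivative_eq_intros)
  have dD1: "(D1 has_real_derivative D2 s) (at s within {0..T})" if "s \<in> {0..T}" for s
    using F G that unfolding mean_BVP_def C2_on_def D2_def D1_def
    by (auto intro!: derivative_eq_intros)
  have ode: "D2 s = - k * D1 s" if "s \<in> {0..T}" for s
  proof -
    have "2 * \<eta> * F2 s + \<gamma> * F1 s = 2 * \<eta> * G2 s + \<gamma> * G1 s"
      using F G that unfolding mean_BVP_def by auto
    then have "2 * \<eta> * D2 s = - \<gamma> * D1 s" unfolding D2_def D1_def by algebra
    then show ?thesis using e unfolding k_def by (simp add: field_simps)
  qed
  define W where "W s = D1 s * exp (k * s)" for s
  have dW: "(W has_real_derivative 0) (at s within {0..T})" if s: "s \<in> {0..T}" for s
    unfolding W_def using ode[OF s]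
    by (auto intro!: derivative_eq_intros dD1[OF s] simp: algebra_simps)
  define c where "c = D1 0"
  have D1e: "D1 s = c * exp (- (k * s))" if s: "s \<in> {0..T}" for s
  proof -
    have "W s = W 0" using zero_deriv_eq[of T W s 0] dW s T0 by auto
    then have "D1 s * exp (k * s) = c" unfolding W_def c_def by simp
    then show ?thesis by (simp add: exp_minus field_simps)
  qed
  define H where "H s = D s - c / k * (1 - exp (- (k * s)))" for s
  have dH: "(H has_real_derivative 0) (at s within {0..T})" if s: "s \<in> {0..T}" for s
    unfolding H_def using D1e[OF s] k
    by (auto intro!: derivative_eq_intros dD[OF s])
  have D0: "D 0 = 0" using F G unfolding mean_BVP_def D_def by simp
  have De: "D s = c / k * (1 - exp (- (k * s)))" if s: "s \<in> {0..T}" for s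
  proof -
    have "H s = H 0" using zero_deriv_eq[of T H s 0] dH s T0 by auto
    then show ?thesis unfolding H_def using D0 by simp
  qed
  have bc: "D1 T + (\<alpha> / \<eta>) * D T = 0"
    using F G unfolding mean_BVP_def D_def D1_def by (simp add: algebra_simps)
  have TT: "T \<in> {0..T}" using T0 by auto
  have "c * (exp (- (k * T)) + (\<alpha> / \<eta>) / k * (1 - exp (- (k * T)))) = 0"
    using bc D1e[OF TT] De[OF TT] by (simp add: algebra_simps)
  moreover have "exp (- (k * T)) + (\<alpha> / \<eta>) / k * (1 - exp (- (k * T))) > 0"
  proof -
    have "exp (- (k * T)) \<le> 1" using k T0 by simp
    then have "(\<alpha> / \<eta>) / k * (1 - exp (- (k * T))) \<ge> 0" using al e k by simp
    then show ?thesis by (smt (verit) exp_gt_zero)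
  qed
  ultimately have "c = 0" by simp
  then have "D t = 0" using De[OF t] by simp
  then show ?thesis unfolding D_def by simp
qed

lemma riccati_unique:
  fixes h2 :: "real \<Rightarrow> real"
  assumes e: "\<eta> > 0" and al: "\<alpha> > 0"
    and d: "\<And>t. t \<in> {0..T} \<Longrightarrow> (h2 has_real_derivative - (h2 t)\<^sup>2 / \<eta>) (at t within {0..T})"
    and hT: "h2 T = - \<alpha>" and t: "t \<in> {0..T}"
  shows "h2 t = - \<alpha> * \<eta> / (\<eta> + \<alpha> * (T - t))"
proof -
  have T0: "0 \<le> T" using t by auto
  have cont: "continuous_on {0..T} h2"
    using d by (meson DERIV_continuous continuous_on_eq_continuous_within)
  define H where "H s = integral {0..s} h2" for s
  have dHH: "(H has_real_derivative h2 s) (at s within {0..T})" if "s \<in> {0..T}" for s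
    unfolding H_def using integral_has_real_derivative[OF cont that] .
  define Q where "Q s = h2 s * (\<eta> + \<alpha> * (T - s)) + \<alpha> * \<eta>" for s
  define K where "K s = Q s * exp (H s / \<eta>)" for s
  have dK: "(K has_real_derivative 0) (at s within {0..T})" if s: "s \<in> {0..T}" for s
    unfolding K_def Q_def using e
    by (auto intro!: derivative_eq_intros d[OF s] dHH[OF s] simp: field_simps power2_eq_square)
  have TT: "T \<in> {0..T}" using T0 by auto
  have "K t = K T" using zero_deriv_eq[of T K t T] dK t TT by auto
  also have "K T = 0" unfolding K_def Q_def using hT by simp
  finally have "Q t = 0" unfolding K_def by simp
  moreover have "\<eta> + \<alpha> * (T - t) > 0" using e al t by (simp add: add_pos_nonneg)
  ultimately show ?thesis unfolding Q_def by (simp add: field_simps)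
qed


theorem mainTheorem8:
  fixes \<gamma>0 \<gamma> \<eta> \<alpha> T E0 :: real
    and \<nu>0 :: "real \<Rightarrow> real"
    and m0 :: "real measure"
    and h :: "real \<Rightarrow> real \<Rightarrow> real"
    and h0 h1 h2 :: "real \<Rightarrow> real"
    and m :: "real \<Rightarrow> real measure"
    and \<mu> :: "real \<Rightarrow> real"
  assumes pos: "\<gamma>0 > 0" "\<gamma> > 0" "\<eta> > 0" "\<alpha> > 0" "T > 0"
    and nu_cont: "continuous_on {0..T} \<nu>0"
    and m0_prob: "prob_space m0" and m0_sets: "sets m0 = sets borel"
    and m0_int: "integrable m0 (\<lambda>q. q)"
    and E0_def: "E0 = (\<integral>q. q \<partial>m0)"
    \<comment> \<open>quadratic ansatz and terminal conditions\<close>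
    and h_quad: "\<And>t q. h t q = h0 t + h1 t * q + h2 t * q\<^sup>2"
    and h_T: "h0 T = 0" "h1 T = 0" "h2 T = - \<alpha>"
    \<comment> \<open>HJB equation on [0,T]\<close>
    and HJB: "\<And>t q. t \<in> {0..T} \<Longrightarrow>
       \<exists>Dt. ((\<lambda>s. h s q) has_real_derivative Dt) (at t within {0..T})
          \<and> Dt + (1 / (4 * \<eta>)) * (deriv (h t) q)\<^sup>2 + (\<gamma>0 * \<nu>0 t + \<gamma> * \<mu> t) * q = 0"
    \<comment> \<open>the minor inventory distributions\<close>
    and m_init: "m 0 = m0"
    and m_prob: "\<And>t. t \<in> {0..T} \<Longrightarrow> prob_space (m t)"
    and m_sets: "\<And>t. t \<in> {0..T} \<Longrightarrow> sets (m t) = sets borel"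
    and m_int: "\<And>t. t \<in> {0..T} \<Longrightarrow> integrable (m t) (\<lambda>q. q)"
    \<comment> \<open>continuity equation in weak (integrated-in-time) form\<close>
    and FP: "\<And>\<phi> \<phi>' t. (\<And>q. (\<phi> has_real_derivative \<phi>' q) (at q)) \<Longrightarrow> continuous_on UNIV \<phi>'
       \<Longrightarrow> bounded (range \<phi>') \<Longrightarrow> t \<in> {0..T} \<Longrightarrow>
       ((\<lambda>s. \<integral>q. \<phi>' q * (deriv (h s) q / (2 * \<eta>)) \<partial>(m s))
          has_integral ((\<integral>q. \<phi> q \<partial>(m t)) - (\<integral>q. \<phi> q \<partial>m0))) {0..t}"
    \<comment> \<open>consistency condition\<close>
    and mu_def: "\<And>t. t \<in> {0..T} \<Longrightarrow> \<mu> t = (\<integral>q. deriv (h t) q / (2 * \<eta>) \<partial>(m t))"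
  shows "\<exists>E1 E2. mean_BVP \<gamma>0 \<gamma> \<eta> \<alpha> T \<nu>0 E0 (\<lambda>t. \<integral>q. q \<partial>(m t)) E1 E2
     \<and> (\<forall>F F1 F2. mean_BVP \<gamma>0 \<gamma> \<eta> \<alpha> T \<nu>0 E0 F F1 F2
           \<longrightarrow> (\<forall>t\<in>{0..T}. F t = (\<integral>q. q \<partial>(m t))))
     \<and> (\<forall>t\<in>{0..T}.
          \<mu> t = E1 t
        \<and> h2 t = - \<alpha> * \<eta> / (\<eta> + \<alpha> * (T - t))
        \<and> h1 t = 2 * \<eta> * E1 t - 2 * h2 t * (\<integral>q. q \<partial>(m t))
        \<and> h0 t = (1 / (4 * \<eta>)) * integral {t..T} (\<lambda>s. (h1 s)\<^sup>2))"
  proof -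
  have g0: "\<gamma>0 > 0" and g: "\<gamma> > 0" and e: "\<eta> > 0" and al: "\<alpha> > 0" and T0: "T > 0"
    using pos by auto
  define E where "E t = (\<integral>q. q \<partial>(m t))" for t
  have hfun: "h t = (\<lambda>q. h0 t + h1 t * q + h2 t * q\<^sup>2)" for t
    using h_quad by auto
  have hder: "deriv (h t) q = h1 t + 2 * h2 t * q" for t q
  proof -
    have "(h t has_real_derivative h1 t + 2 * h2 t * q) (at q)"
      unfolding hfun by (auto intro!: derivative_eq_intros)
    then show ?thesis by (rule DERIV_imp_deriv)
  qed
  have "\<forall>t q. \<exists>D. t \<in> {0..T} \<longrightarrow> (((\<lambda>s. h s q) has_real_derivative D) (at t within {0..T})
          \<and> D + (1 / (4 * \<eta>)) * (deriv (h t) q)\<^sup>2 + (\<gamma>0 * \<nu>0 t + \<gamma> * \<mu> t) * q = 0)"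
    using HJB by blast
  then obtain Dh where Dh: "\<And>t q. t \<in> {0..T} \<Longrightarrow> ((\<lambda>s. h s q) has_real_derivative Dh t q) (at t within {0..T})
          \<and> Dh t q + (1 / (4 * \<eta>)) * (deriv (h t) q)\<^sup>2 + (\<gamma>0 * \<nu>0 t + \<gamma> * \<mu> t) * q = 0"
    by metis
  define d1 where "d1 t = (Dh t 1 - Dh t (-1)) / 2" for t
  define d2 where "d2 t = (Dh t 1 + Dh t (-1)) / 2 - Dh t 0" for t
  have f0: "(\<lambda>s. h s 0) = h0" using h_quad by auto
  have f1: "h1 = (\<lambda>s. (h s 1 - h s (-1)) / 2)" using h_quad by auto
  have f2: "h2 = (\<lambda>s. (h s 1 + h s (-1)) / 2 - h s 0)" using h_quad by (auto simp: field_simps)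
  have dh0: "(h0 has_real_derivative Dh t 0) (at t within {0..T})" if "t \<in> {0..T}" for t
    using Dh[OF that, of 0] f0 by simp
  have dh1: "(h1 has_real_derivative d1 t) (at t within {0..T})" if "t \<in> {0..T}" for t
    unfolding f1 d1_def using Dh[OF that, of 1] Dh[OF that, of "-1"]
    by (auto intro!: derivative_eq_intros)
  have dh2: "(h2 has_real_derivative d2 t) (at t within {0..T})" if "t \<in> {0..T}" for t
    unfolding f2 d2_def using Dh[OF that, of 1] Dh[OF that, of "-1"] Dh[OF that, of 0]
    by (auto intro!: derivative_eq_intros)
  have eq0: "Dh t 0 = - (h1 t)\<^sup>2 / (4 * \<eta>)" if "t \<in> {0..T}" for t
    using Dh[OF that, of 0] e unfolding hder by (simp add: field_simps)
  have eq1: "d1 t = - h1 t * h2 t / \<eta> - (\<gamma>0 * \<nu>0 t + \<gamma> * \<mu> t)" if "t \<in> {0..T}" for t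
  proof -
    have a: "Dh t 1 + (1 / (4 * \<eta>)) * (h1 t + 2 * h2 t)\<^sup>2 + (\<gamma>0 * \<nu>0 t + \<gamma> * \<mu> t) = 0"
      using Dh[OF that, of 1] unfolding hder by simp
    have b: "Dh t (-1) + (1 / (4 * \<eta>)) * (h1 t - 2 * h2 t)\<^sup>2 - (\<gamma>0 * \<nu>0 t + \<gamma> * \<mu> t) = 0"
      using Dh[OF that, of "-1"] unfolding hder by simp
    show ?thesis using a b e unfolding d1_def by (simp add: field_simps power2_eq_square)
  qed
  have eq2: "d2 t = - (h2 t)\<^sup>2 / \<eta>" if "t \<in> {0..T}" for t
  proof -
    have a: "Dh t 1 + (1 / (4 * \<eta>)) * (h1 t + 2 * h2 t)\<^sup>2 + (\<gamma>0 * \<nu>0 t + \<gamma> * \<mu> t) = 0"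
      using Dh[OF that, of 1] unfolding hder by simp
    have b: "Dh t (-1) + (1 / (4 * \<eta>)) * (h1 t - 2 * h2 t)\<^sup>2 - (\<gamma>0 * \<nu>0 t + \<gamma> * \<mu> t) = 0"
      using Dh[OF that, of "-1"] unfolding hder by simp
    show ?thesis using a b e eq0[OF that] unfolding d2_def by (simp add: field_simps power2_eq_square)
  qed
  have h2_form: "h2 t = - \<alpha> * \<eta> / (\<eta> + \<alpha> * (T - t))" if "t \<in> {0..T}" for t
    using riccati_unique[of \<eta> \<alpha> T h2 t] e al h_T(3) that dh2 eq2 by auto
  have h1c: "continuous_on {0..T} h1"
    using dh1 by (meson DERIV_continuous continuous_on_eq_continuous_within)
  have h2c: "continuous_on {0..T} h2"
    using dh2 by (meson DERIV_continuous continuous_on_eq_continuous_within)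
  have mu_eq: "\<mu> t = (h1 t + 2 * h2 t * E t) / (2 * \<eta>)" if t: "t \<in> {0..T}" for t
  proof -
    interpret P: prob_space "m t" using m_prob[OF t] .
    have "\<mu> t = (\<integral>q. (h1 t + 2 * h2 t * q) \<partial>(m t)) / (2 * \<eta>)"
      using mu_def[OF t] unfolding hder by simp
    also have "(\<integral>q. (h1 t + 2 * h2 t * q) \<partial>(m t)) = (\<integral>q. h1 t \<partial>(m t)) + (\<integral>q. 2 * h2 t * q \<partial>(m t))"
      by (rule Bochner_Integration.integral_add) (auto intro: m_int[OF t])
    also have "\<dots> = h1 t + 2 * h2 t * E t"
      unfolding E_def by (simp add: P.prob_space)
    finally show ?thesis .
  qed
  define E1 where "E1 t = (h1 t + 2 * h2 t * E t) / (2 * \<eta>)" for t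
  define E2 where "E2 t = (- \<gamma>0 * \<nu>0 t - \<gamma> * E1 t) / (2 * \<eta>)" for t
  have EE0: "E 0 = E0" unfolding E_def m_init E0_def ..
  have mu_int: "(\<mu> has_integral (E t - E0)) {0..t}" if t: "t \<in> {0..T}" for t
  proof -
    have "((\<lambda>s. \<integral>q. 1 * (deriv (h s) q / (2 * \<eta>)) \<partial>(m s))
          has_integral ((\<integral>q. q \<partial>(m t)) - (\<integral>q. q \<partial>m0))) {0..t}"
      by (rule FP[of "\<lambda>q. q" "\<lambda>q. 1" t])
         (simp add: DERIV_ident, simp, simp, use t in simp)
    then have "((\<lambda>s. \<integral>q. 1 * (deriv (h s) q / (2 * \<eta>)) \<partial>(m s)) has_integral (E t - E0)) {0..t}"
      unfolding E_def E0_def .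
    then show ?thesis
      by (rule has_integral_eq[rotated]) (use t mu_def in auto)
  qed
  have TT: "T \<in> {0..T}" using T0 by auto
  have E_int: "E t = E0 + integral {0..t} \<mu>" if t: "t \<in> {0..T}" for t
    using integral_unique[OF mu_int[OF t]] by simp
  have mu_ion: "\<mu> integrable_on {0..T}" using has_integral_integrable[OF mu_int[OF TT]] .
  have Ec: "continuous_on {0..T} E"
  proof -
    have "continuous_on {0..T} (\<lambda>t. E0 + integral {0..t} \<mu>)"
      by (intro continuous_intros indefinite_integral_continuous_1 mu_ion)
    then show ?thesis by (rule continuous_on_eq) (use E_int in auto)
  qed
  have E1c: "continuous_on {0..T} E1"
    unfolding E1_def by (intro continuous_intros h1c h2c Ec) (use e in auto)
  have muE1: "\<mu> t = E1 t" if "t \<in> {0..T}" for t using mu_eq[OF that] unfolding E1_def .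
  have E_int1: "E t = E0 + integral {0..t} E1" if t: "t \<in> {0..T}" for t
  proof -
    have "integral {0..t} \<mu> = integral {0..t} E1"
      by (rule integral_cong) (use t muE1 in auto)
    then show ?thesis using E_int[OF t] by simp
  qed
  have dE: "(E has_real_derivative E1 t) (at t within {0..T})" if t: "t \<in> {0..T}" for t
  proof -
    have "((\<lambda>x. E0 + integral {0..x} E1) has_real_derivative E1 t) (at t within {0..T})"
      using integral_has_real_derivative[OF E1c t] by (auto intro!: derivative_eq_intros)
    then show ?thesis
      by (rule has_field_derivative_transform_within[of _ _ _ _ 1]) (use t E_int1 in auto)
  qed
  have Ef: "E1 = (\<lambda>s. (h1 s + 2 * h2 s * E s) / (2 * \<eta>))" by (simp add: E1_def[abs_def])
  have dE1: "(E1 has_real_derivative E2 t) (at t within {0..T})" if t: "t \<in> {0..T}" for t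
  proof -
    let ?V = "(d1 t + 2 * (d2 t * E t + h2 t * ((h1 t + 2 * h2 t * E t) / (2 * \<eta>)))) / (2 * \<eta>)"
    have dE': "(E has_real_derivative (h1 t + 2 * h2 t * E t) / (2 * \<eta>)) (at t within {0..T})"
      using dE[OF t] unfolding E1_def .
    have "((\<lambda>s. (h1 s + 2 * h2 s * E s) / (2 * \<eta>)) has_real_derivative ?V) (at t within {0..T})"
      using e by (auto intro!: derivative_eq_intros dh1[OF t] dh2[OF t] dE'  simp: field_simps)
    then have "(E1 has_real_derivative ?V) (at t within {0..T})" by (simp only: Ef)
    moreover have "?V = E2 t"
      unfolding eq1[OF t] eq2[OF t] mu_eq[OF t] E2_def E1_def
      using e by (simp add: field_simps power2_eq_square)
    ultimately show ?thesis by simp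
  qed
  have E2c: "continuous_on {0..T} E2"
    unfolding E2_def by (intro continuous_intros nu_cont E1c) (use e in auto)
  have BVP: "mean_BVP \<gamma>0 \<gamma> \<eta> \<alpha> T \<nu>0 E0 E E1 E2"
    unfolding mean_BVP_def C2_on_def
  proof (intro conjI ballI)
    show "E1 T + \<alpha> / \<eta> * E T = 0"
      unfolding E1_def using h_T e by (simp add: field_simps)
    show "2 * \<eta> * E2 t + \<gamma> * E1 t = - \<gamma>0 * \<nu>0 t" for t
      unfolding E2_def using e by (simp add: field_simps)
  qed (use dE dE1 E2c EE0 in auto)
  have h0_form: "h0 t = (1 / (4 * \<eta>)) * integral {t..T} (\<lambda>s. (h1 s)\<^sup>2)" if t: "t \<in> {0..T}" for t
  proof -
    have "((\<lambda>s. - (h1 s)\<^sup>2 / (4 * \<eta>)) has_integral (h0 T - h0 t)) {t..T}"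
    proof (rule fundamental_theorem_of_calculus)
      show "t \<le> T" using t by auto
      fix x assume x: "x \<in> {t..T}"
      then have x': "x \<in> {0..T}" using t by auto
      have "(h0 has_real_derivative - (h1 x)\<^sup>2 / (4 * \<eta>)) (at x within {0..T})"
        using dh0[OF x'] eq0[OF x'] by simp
      then have "(h0 has_real_derivative - (h1 x)\<^sup>2 / (4 * \<eta>)) (at x within {t..T})"
        by (rule DERIV_subset) (use t in auto)
      then show "(h0 has_vector_derivative - (h1 x)\<^sup>2 / (4 * \<eta>)) (at x within {t..T})"
        by (simp add: has_real_derivative_iff_has_vector_derivative)
    qed
    then have "((\<lambda>s. (- 4 * \<eta>) * (- (h1 s)\<^sup>2 / (4 * \<eta>))) has_integral ((- 4 * \<eta>) * (h0 T - h0 t))) {t..T}"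
      by (rule has_integral_mult_right)
    then have "((\<lambda>s. (h1 s)\<^sup>2) has_integral (4 * \<eta> * h0 t)) {t..T}"
      using e h_T by simp
    then have "integral {t..T} (\<lambda>s. (h1 s)\<^sup>2) = 4 * \<eta> * h0 t" by (rule integral_unique)
    then show ?thesis using e by simp
  qed
  show ?thesis
  proof (intro exI conjI allI impI ballI)
    show "mean_BVP \<gamma>0 \<gamma> \<eta> \<alpha> T \<nu>0 E0 (\<lambda>t. \<integral>q. q \<partial>(m t)) E1 E2"
      using BVP unfolding E_def[abs_def] .
    show "F t = (\<integral>q. q \<partial>(m t))" if "mean_BVP \<gamma>0 \<gamma> \<eta> \<alpha> T \<nu>0 E0 F F1 F2" "t \<in> {0..T}" for F F1 F2 t
      using bvp_unique[OF g e al that(1) BVP that(2)] unfolding E_def .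
    fix t assume t: "t \<in> {0..T}"
    show "\<mu> t = E1 t" by (rule muE1[OF t])
    show "h2 t = - \<alpha> * \<eta> / (\<eta> + \<alpha> * (T - t))" by (rule h2_form[OF t])
    show "h1 t = 2 * \<eta> * E1 t - 2 * h2 t * (\<integral>q. q \<partial>(m t))"
      unfolding E1_def E_def[symmetric] using e by (simp add: field_simps)
    show "h0 t = (1 / (4 * \<eta>)) * integral {t..T} (\<lambda>s. (h1 s)\<^sup>2)" by (rule h0_form[OF t])
  qed
qed

end
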